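(* If $w,w'\in W_+$ and the affine planes $w\mathcal D_0$ and $w'\mathcal D_0$ are parallel (i.e. have the same direction subspace), then $w\mathcal D_0=w'\mathcal D_0$.
   Context: Let $R$ be an irreducible reduced root system of rank $n$ in $V=\mathbb C^n$ (spanning $\mathbb R^n$), with the standard symmetric bilinear form $(\cdot,\cdot)$, $\beta^\vee=2\beta/(\beta,\beta)$, reflections $s_\alpha(x)=x-(\alpha,x)\alpha^\vee$, Weyl group $W$, positive roots $R_+$ and simple roots $\Delta=\{\alpha_1,\dots,\alpha_n\}$. Let $\eta:R\to\mathbb C$ be a $W$-invariant function ($\eta_{w\alpha}=\eta_\alpha$). For $S\subset R$ put $H_\eta(S)=\{x\in V:(\alpha,x)=\eta_\alpha\ \forall\alpha\in S\}$. Fix $S_0\subset\Delta$ and let $W_+=\{w\in W: wS_0\subset R_+\}$, $\mathcal D_0=H_\eta(S_0)$. *)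

theory Defs
  imports "HOL-Analysis.Analysis"
begin

text \<open>V = C^n is modelled as complex ^ 'n with n = CARD('n).
  The standard symmetric (NOT Hermitian) bilinear form.\<close>

type_synonym 'n cvec = "complex ^ 'n"

definition bf :: "'n::finite cvec \<Rightarrow> 'n cvec \<Rightarrow> complex" where
  "bf x y = (\<Sum>i\<in>UNIV. x $ i * y $ i)"

definition is_real_vec :: "'n::finite cvec \<Rightarrow> bool" where
  "is_real_vec x \<longleftrightarrow> (\<forall>i. x $ i \<in> \<real>)"

definition coroot :: "'n::finite cvec \<Rightarrow> 'n cvec" where
  "coroot b = (2 / bf b b) *s b"

definition refl :: "'n::finite cvec \<Rightarrow> 'n cvec \<Rightarrow> 'n cvec" where
  "refl a x = x - bf a x *s coroot a"

definition root_system :: "'n::finite cvec set \<Rightarrow> bool" where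
  "root_system R \<longleftrightarrow>
     finite R \<and> 0 \<notin> R \<and> (\<forall>a\<in>R. is_real_vec a) \<and>
     (\<forall>x. is_real_vec x \<longrightarrow> (\<exists>c::'n cvec \<Rightarrow> real. x = (\<Sum>a\<in>R. complex_of_real (c a) *s a))) \<and>
     (\<forall>a\<in>R. refl a ` R = R) \<and>
     (\<forall>a\<in>R. \<forall>b\<in>R. bf b (coroot a) \<in> \<int>)"

definition reduced :: "'n::finite cvec set \<Rightarrow> bool" where
  "reduced R \<longleftrightarrow> (\<forall>a\<in>R. \<forall>c. c *s a \<in> R \<longrightarrow> c = 1 \<or> c = -1)"

definition irreducible_rs :: "'n::finite cvec set \<Rightarrow> bool" where
  "irreducible_rs R \<longleftrightarrow>
     \<not> (\<exists>A B. A \<noteq> {} \<and> B \<noteq> {} \<and> A \<union> B = R \<and> A \<inter> B = {} \<and>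
            (\<forall>a\<in>A. \<forall>b\<in>B. bf a b = 0))"

definition simple_system :: "'n::finite cvec set \<Rightarrow> 'n cvec set \<Rightarrow> bool" where
  "simple_system R D \<longleftrightarrow> D \<subseteq> R \<and>
     (\<forall>c::'n cvec \<Rightarrow> real. (\<Sum>a\<in>D. complex_of_real (c a) *s a) = 0 \<longrightarrow> (\<forall>a\<in>D. c a = 0)) \<and>
     (\<forall>b\<in>R. \<exists>k::'n cvec \<Rightarrow> int. b = (\<Sum>a\<in>D. of_int (k a) *s a) \<and>
              ((\<forall>a\<in>D. k a \<ge> 0) \<or> (\<forall>a\<in>D. k a \<le> 0)))"

definition pos_roots :: "'n::finite cvec set \<Rightarrow> 'n cvec set \<Rightarrow> 'n cvec set" where
  "pos_roots R D = {b\<in>R. \<exists>k::'n cvec \<Rightarrow> int. b = (\<Sum>a\<in>D. of_int (k a) *s a) \<and> (\<forall>a\<in>D. k a \<ge> 0)}"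

inductive_set weyl :: "'n::finite cvec set \<Rightarrow> ('n cvec \<Rightarrow> 'n cvec) set" for R where
  weyl_id: "id \<in> weyl R"
| weyl_step: "w \<in> weyl R \<Longrightarrow> a \<in> R \<Longrightarrow> refl a \<circ> w \<in> weyl R"

definition H_eta :: "('n::finite cvec \<Rightarrow> complex) \<Rightarrow> 'n cvec set \<Rightarrow> 'n cvec set" where
  "H_eta eta S = {x. \<forall>a\<in>S. bf a x = eta a}"

definition W_plus :: "'n::finite cvec set \<Rightarrow> 'n cvec set \<Rightarrow> 'n cvec set \<Rightarrow> ('n cvec \<Rightarrow> 'n cvec) set" where
  "W_plus R D S0 = {w\<in>weyl R. w ` S0 \<subseteq> pos_roots R D}"

definition direction :: "'n::finite cvec set \<Rightarrow> 'n cvec set" where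
  "direction A = {x - y | x y. x \<in> A \<and> y \<in> A}"

end

theory Submission
  imports Defs
begin


lemma bf_sym: "bf x y = bf y x" unfolding bf_def by (simp add: mult.commute)
lemma bf_add_l: "bf (x + y) z = bf x z + bf y z" unfolding bf_def by (simp add: distrib_right sum.distrib)
lemma bf_add_r: "bf z (x + y) = bf z x + bf z y" unfolding bf_def by (simp add: distrib_left sum.distrib)
lemma bf_diff_l: "bf (x - y) z = bf x z - bf y z" unfolding bf_def by (simp add: left_diff_distrib sum_subtractf)
lemma bf_diff_r: "bf z (x - y) = bf z x - bf z y" unfolding bf_def by (simp add: right_diff_distrib sum_subtractf)
lemma bf_scale_l: "bf (c *s x) z = c * bf x z" unfolding bf_def by (simp add: sum_distrib_left mult.assoc)
lemma bf_scale_r: "bf z (c *s x) = c * bf z x" unfolding bf_def by (simp add: sum_distrib_left mult.left_commute)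
lemma bf_zero_r[simp]: "bf z 0 = 0" unfolding bf_def by simp

lemma refl_bf:
  assumes "bf a a \<noteq> 0" shows "bf (refl a x) (refl a y) = bf x y"
  using assms unfolding refl_def coroot_def
  by (simp add: bf_diff_l bf_diff_r bf_scale_l bf_scale_r bf_sym[of x a] field_simps)

lemma refl_invol:
  assumes "bf a a \<noteq> 0" shows "refl a (refl a x) = x"
proof -
  have "bf a (refl a x) = - bf a x" using assms unfolding refl_def coroot_def
    by (simp add: bf_diff_r bf_scale_r field_simps)
  then show ?thesis unfolding refl_def[of a "refl a x"] by (simp add: refl_def)
qed

lemma refl_add: "refl a (x + y) = refl a x + refl a y"
  unfolding refl_def by (simp add: bf_add_r vector_sadd_rdistrib algebra_simps)
lemma refl_scale: "refl a (c *s x) = c *s refl a x"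
  unfolding refl_def by (simp add: bf_scale_r vector_ssub_ldistrib vector_smult_assoc)

lemma real_vec_bf_nz:
  assumes "is_real_vec a" "a \<noteq> 0" shows "bf a a \<noteq> 0"
proof
  assume h: "bf a a = 0"
  have "\<forall>i. Re (a$i) = a$i" using assms(1) unfolding is_real_vec_def by (metis Reals_cases Re_complex_of_real)
  hence "bf a a = complex_of_real (\<Sum>i\<in>UNIV. (Re (a$i))^2)" unfolding bf_def of_real_sum
    by (simp add: power2_eq_square)
  with h have "(\<Sum>i\<in>UNIV. (Re (a$i))^2) = 0" by (metis of_real_eq_0_iff)
  hence "\<forall>i. (Re (a$i))^2 = 0" using sum_nonneg_eq_0_iff[of UNIV "\<lambda>i. (Re (a$i))^2"] by simp
  hence "\<forall>i. a$i = 0" using \<open>\<forall>i. Re (a$i) = a$i\<close> by (metis power_eq_0_iff zero_neq_numeral of_real_0)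
  hence "a = 0" by (simp add: vec_eq_iff)
  with assms show False by simp
qed


lemma weyl_props:
  fixes R :: "'n::finite cvec set"
  assumes nz: "\<And>a. a \<in> R \<Longrightarrow> bf a a \<noteq> 0" and pr: "\<And>a. a \<in> R \<Longrightarrow> refl a ` R = R"
    and v: "v \<in> weyl R"
  shows "(\<forall>x y. bf (v x) (v y) = bf x y) \<and> (\<forall>x y. v (x + y) = v x + v y) \<and>
         (\<forall>c x. v (c *s x) = c *s v x) \<and> v ` R = R \<and> bij v"
  using v
proof (induction rule: weyl.induct)
  case weyl_id
  then show ?case by (simp add: bij_id[unfolded id_def])
next
  case (weyl_step w a)
  have b: "bij (refl a)" using involuntory_imp_bij[of "refl a"] refl_invol nz[OF weyl_step(2)] by blast
  show ?case using weyl_step.IH refl_bf[OF nz[OF weyl_step(2)]] refl_add refl_scale pr[OF weyl_step(2)]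
      bij_comp[OF _ b] 
    apply (simp add: refl_add refl_scale)
  proof
    assume h: "(\<forall>x y. bf (w x) (w y) = bf x y) \<and> (\<forall>x y. w (x + y) = w x + w y) \<and>
         (\<forall>c x. w (c *s x) = c *s w x) \<and> w ` R = R \<and> bij w"
      and r: "refl a ` R = R" and bc: "\<And>f::'n cvec \<Rightarrow> 'n cvec. bij f \<Longrightarrow> bij (refl a \<circ> f)"
    have "(\<lambda>x. refl a (w x)) ` R = refl a ` (w ` R)" by (simp add: image_image)
    thus "(\<lambda>x. refl a (w x)) ` R = R" using h r by simp
    show "bij (\<lambda>b. refl a (w b))" using bc[of w] h by (simp add: comp_def)
  qed
qed

lemma weyl_sum:
  fixes v :: "'n::finite cvec \<Rightarrow> 'n cvec"
  assumes add: "\<forall>x y. v (x + y) = v x + v y" and sc: "\<forall>c x. v (c *s x) = c *s v x"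
    and "finite A"
  shows "v (\<Sum>a\<in>A. f a) = (\<Sum>a\<in>A. v (f a))"
  using assms(3)
proof (induction rule: finite_induct)
  case empty
  have "v 0 = v ((0::complex) *s 0)" by simp
  also have "\<dots> = 0" using sc by (metis vector_smult_lzero)
  finally show ?case by simp
next
  case (insert x F) then show ?case using add by simp
qed

lemma smult_sum: "finite A \<Longrightarrow> (c::complex) *s (\<Sum>a\<in>A. f a) = (\<Sum>a\<in>A. c *s f a)"
  by (induction rule: finite_induct) (simp_all add: vector_add_ldistrib)

lemma sum_smult_l: "finite A \<Longrightarrow> (\<Sum>a\<in>A. f a) *s (x::'n::finite cvec) = (\<Sum>a\<in>A. f a *s x)"
  by (induction rule: finite_induct) (simp_all add: vector_sadd_rdistrib)


lemma uniq_coeff: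
  fixes D S :: "'n::finite cvec set"
  assumes ss: "simple_system R D" and sub: "S \<subseteq> D" and fin: "finite D"
    and eq: "(\<Sum>a\<in>S. complex_of_real (f a) *s a) = (\<Sum>a\<in>S. complex_of_real (g a) *s a)"
  shows "\<forall>a\<in>S. f a = g a"
proof -
  define c where "c a = (if a \<in> S then f a - g a else 0)" for a
  have finS: "finite S" using sub fin finite_subset by blast
  have "(\<Sum>a\<in>D. complex_of_real (c a) *s a) = (\<Sum>a\<in>D. if a \<in> S then complex_of_real (f a - g a) *s a else 0)"
    by (rule sum.cong) (auto simp: c_def)
  also have "\<dots> = (\<Sum>a\<in>D \<inter> S. complex_of_real (f a - g a) *s a)"
    by (rule sum.inter_restrict[OF fin, symmetric])
  also have "D \<inter> S = S" using sub by blast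
  also have "(\<Sum>a\<in>S. complex_of_real (f a - g a) *s a) = 
      (\<Sum>a\<in>S. complex_of_real (f a) *s a) - (\<Sum>a\<in>S. complex_of_real (g a) *s a)"
    by (simp add: vector_sub_rdistrib sum_subtractf)
  also have "\<dots> = 0" using eq by simp
  finally have "\<forall>a\<in>D. c a = 0" using ss unfolding simple_system_def by blast
  thus ?thesis using sub unfolding c_def by (metis (full_types) eq_iff_diff_eq_0 subsetD)
qed

definition re :: "'n::finite cvec \<Rightarrow> real ^ 'n" where "re v = (\<chi> i. Re (v $ i))"
definition cv :: "real ^ 'n \<Rightarrow> 'n::finite cvec" where "cv u = (\<chi> i. complex_of_real (u $ i))"

lemma cv_re: "is_real_vec v \<Longrightarrow> cv (re v) = v"
  unfolding cv_def re_def is_real_vec_def by (simp add: vec_eq_iff)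

lemma bf_cv: "is_real_vec v \<Longrightarrow> bf v (cv u) = complex_of_real (inner (re v) u)"
proof -
  assume "is_real_vec v"
  hence "v = cv (re v)" by (simp add: cv_re)
  hence "bf v (cv u) = bf (cv (re v)) (cv u)" by simp
  also have "\<dots> = complex_of_real (inner (re v) u)"
    unfolding bf_def inner_vec_def cv_def by (simp add: of_real_sum)
  finally show ?thesis .
qed

lemma cv_add: "cv (x + y) = cv x + cv y" unfolding cv_def by (simp add: vec_eq_iff)
lemma cv_scale: "cv (c *\<^sub>R x) = complex_of_real c *s cv x" unfolding cv_def by (simp add: vec_eq_iff)
lemma cv_sum: "finite A \<Longrightarrow> cv (\<Sum>a\<in>A. f a) = (\<Sum>a\<in>A. cv (f a))"
  by (induction rule: finite_induct) (simp_all add: cv_add, simp add: cv_def vec_eq_iff)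

lemma span_lemma:
  fixes S0 :: "'n::finite cvec set"
  assumes fin: "finite S0" and rS: "\<forall>a\<in>S0. is_real_vec a" and rg: "is_real_vec g"
    and orth: "\<And>u. (\<forall>a\<in>S0. bf a (cv u) = 0) \<Longrightarrow> bf g (cv u) = 0"
  shows "\<exists>c. g = (\<Sum>a\<in>S0. complex_of_real (c a) *s a)"
proof -
  obtain p z where p: "p \<in> span (re ` S0)" and z: "\<And>w. w \<in> span (re ` S0) \<Longrightarrow> orthogonal z w"
    and d: "re g = p + z" using orthogonal_subspace_decomp_exists by blast
  have "\<forall>a\<in>S0. bf a (cv z) = 0"
  proof
    fix a assume a: "a \<in> S0"
    have "orthogonal z (re a)" using z a by (simp add: span_base)
    thus "bf a (cv z) = 0" using bf_cv[of a z] rS a by (simp add: orthogonal_def inner_commute)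
  qed
  hence "bf g (cv z) = 0" by (rule orth)
  hence "inner (re g) z = 0" using bf_cv[OF rg] by simp
  hence "inner p z + inner z z = 0" using d by (simp add: inner_add_left)
  moreover have "inner p z = 0" using z[OF p] by (simp add: orthogonal_def inner_commute)
  ultimately have "z = 0" by simp
  hence "re g \<in> span (re ` S0)" using d p by simp
  then obtain u where u: "re g = (\<Sum>v\<in>re ` S0. u v *\<^sub>R v)"
    using span_finite[of "re ` S0"] fin by auto
  have inj: "inj_on re S0" using rS cv_re by (metis inj_onI)
  have "g = cv (re g)" using rg cv_re by metis
  also have "\<dots> = cv (\<Sum>a\<in>S0. u (re a) *\<^sub>R re a)" using u sum.reindex[OF inj, of "\<lambda>v. u v *\<^sub>R v"] by (simp add: comp_def)
  also have "\<dots> = (\<Sum>a\<in>S0. complex_of_real (u (re a)) *s a)"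
    using fin rS by (simp add: cv_sum cv_scale cv_re)
  finally show ?thesis by (intro exI[of _ "\<lambda>a. u (re a)"])
qed


lemma ext_sum:
  fixes D S :: "'n::finite cvec set"
  assumes "S \<subseteq> D" "finite D"
  shows "(\<Sum>a\<in>D. (if a \<in> S then f a else 0) *s a) = (\<Sum>a\<in>S. f a *s a)"
proof -
  have "(\<Sum>a\<in>D. (if a \<in> S then f a else 0) *s a) = (\<Sum>a\<in>D. if a \<in> S then f a *s a else 0)"
    by (rule sum.cong) auto
  also have "\<dots> = (\<Sum>a\<in>D \<inter> S. f a *s a)" by (rule sum.inter_restrict[OF assms(2), symmetric])
  also have "D \<inter> S = S" using assms by blast
  finally show ?thesis .
qed

lemma uniq_int:
  fixes D S :: "'n::finite cvec set"
  assumes ss: "simple_system R D" and sub: "S \<subseteq> D" and fin: "finite D"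
    and eq: "(\<Sum>a\<in>S. of_int (f a) *s a) = (\<Sum>a\<in>S. of_int (g a) *s a)"
  shows "\<forall>a\<in>S. f a = (g a :: int)"
  using uniq_coeff[OF ss sub fin, of "\<lambda>a. real_of_int (f a)" "\<lambda>a. real_of_int (g a)"] eq by simp

lemma basic_nz:
  assumes "root_system R" "a \<in> R" shows "bf a a \<noteq> 0"
proof -
  have "is_real_vec a" "a \<noteq> 0" using assms unfolding root_system_def by auto
  thus ?thesis by (rule real_vec_bf_nz)
qed

lemma basic_facts:
  assumes "root_system R" "simple_system R D" "S0 \<subseteq> D"
  shows "finite R" "0 \<notin> R" "\<And>a. a \<in> R \<Longrightarrow> bf a a \<noteq> 0" "\<And>a. a \<in> R \<Longrightarrow> refl a ` R = R"
    "D \<subseteq> R" "finite D" "S0 \<subseteq> R" "finite S0" "\<And>a. a \<in> R \<Longrightarrow> is_real_vec a"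
  using assms basic_nz[OF assms(1)] unfolding root_system_def simple_system_def
  by (auto intro: finite_subset)


lemma step_A:
  fixes R D S0 :: "'n::finite cvec set"
    and eta :: "'n cvec \<Rightarrow> complex"
    and w w' :: "'n cvec \<Rightarrow> 'n cvec"
  assumes rs: "root_system R" and ss: "simple_system R D"
    and et: "\<forall>v\<in>weyl R. \<forall>a\<in>R. eta (v a) = eta a"
    and S0D: "S0 \<subseteq> D"
    and wP: "w \<in> W_plus R D S0" and wP': "w' \<in> W_plus R D S0"
    and dir: "direction (w ` H_eta eta S0) = direction (w' ` H_eta eta S0)"
    and x0: "x0 \<in> H_eta eta S0" and al: "\<alpha> \<in> S0"
  shows "\<exists>k::'n cvec \<Rightarrow> int. (\<forall>a\<in>S0. k a \<ge> 0) \<and> w' \<alpha> = (\<Sum>a\<in>S0. of_int (k a) *s w a)"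
proof -
  note bf = basic_facts[OF rs ss S0D]
  have ww: "w \<in> weyl R" "w' \<in> weyl R" using wP wP' unfolding W_plus_def by auto
  note P = weyl_props[OF bf(3) bf(4) ww(1)]
  note P' = weyl_props[OF bf(3) bf(4) ww(2)]
  have aR: "\<alpha> \<in> R" using al bf(7) by blast
  have "w' \<alpha> \<in> R" using P' aR by blast
  then obtain \<gamma> where gR: "\<gamma> \<in> R" and wg: "w \<gamma> = w' \<alpha>" using P by (metis imageE)
  have orth: "bf \<gamma> (cv u) = 0" if hu: "\<forall>a\<in>S0. bf a (cv u) = 0" for u
  proof -
    have x0u: "x0 + cv u \<in> H_eta eta S0" using x0 hu unfolding H_eta_def by (simp add: bf_add_r)
    have "w (cv u) = w (x0 + cv u) - w x0" using P by simp
    hence "w (cv u) \<in> direction (w ` H_eta eta S0)" unfolding direction_def using x0u x0 by blast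
    hence "w (cv u) \<in> direction (w' ` H_eta eta S0)" using dir by simp
    then obtain x1 x2 where x12: "x1 \<in> H_eta eta S0" "x2 \<in> H_eta eta S0" "w (cv u) = w' x1 - w' x2"
      unfolding direction_def by blast
    have "bf \<gamma> (cv u) = bf (w \<gamma>) (w (cv u))" using P by simp
    also have "\<dots> = bf (w' \<alpha>) (w' x1) - bf (w' \<alpha>) (w' x2)" using wg x12(3) by (simp add: bf_diff_r)
    also have "\<dots> = bf \<alpha> x1 - bf \<alpha> x2" using P' by simp
    also have "\<dots> = 0" using x12 al unfolding H_eta_def by simp
    finally show ?thesis .
  qed
  obtain c where gc: "\<gamma> = (\<Sum>a\<in>S0. complex_of_real (c a) *s a)"
    using span_lemma[OF bf(8) _ bf(9)[OF gR] orth] bf(7,9) by blast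
  obtain k where gk: "\<gamma> = (\<Sum>a\<in>D. of_int (k a) *s a)"
    and sg: "(\<forall>a\<in>D. 0 \<le> k a) \<or> (\<forall>a\<in>D. k a \<le> 0)"
    using ss gR unfolding simple_system_def by blast
  define c' where "c' a = (if a \<in> S0 then complex_of_real (c a) else 0)" for a
  have "(\<Sum>a\<in>D. complex_of_real (real_of_int (k a)) *s a) = (\<Sum>a\<in>D. complex_of_real (if a \<in> S0 then c a else 0) *s a)"
  proof -
    have "(\<Sum>a\<in>D. complex_of_real (if a \<in> S0 then c a else 0) *s a) = (\<Sum>a\<in>D. c' a *s a)"
      by (rule sum.cong) (auto simp: c'_def)
    also have "\<dots> = (\<Sum>a\<in>S0. complex_of_real (c a) *s a)" unfolding c'_def by (rule ext_sum[OF S0D bf(6)])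
    finally show ?thesis using gk gc by simp
  qed
  hence kc: "\<forall>a\<in>D. real_of_int (k a) = (if a \<in> S0 then c a else 0)"
    by (rule uniq_coeff[OF ss order_refl bf(6)])
  have g2: "\<gamma> = (\<Sum>a\<in>S0. of_int (k a) *s a)"
    unfolding gc
  proof (intro sum.cong refl)
    fix x assume "x \<in> S0"
    hence "c x = real_of_int (k x)" using kc S0D by auto
    thus "complex_of_real (c x) *s x = of_int (k x) *s x" by simp
  qed
  have wg2: "w' \<alpha> = (\<Sum>a\<in>S0. of_int (k a) *s w a)"
    unfolding wg[symmetric] g2 using weyl_sum[of w, OF _ _ bf(8)] P by simp
  show ?thesis
  proof (cases "\<forall>a\<in>D. 0 \<le> k a")
    case True
    then show ?thesis using wg2 S0D by blast
  next
    case False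
    hence kn: "\<forall>a\<in>D. k a \<le> 0" using sg by blast
    have "\<forall>a\<in>S0. \<exists>m::'n cvec \<Rightarrow> int. w a = (\<Sum>d\<in>D. of_int (m d) *s d) \<and> (\<forall>d\<in>D. m d \<ge> 0)"
      using wP unfolding W_plus_def pos_roots_def by blast
    then obtain M where M: "\<And>a. a \<in> S0 \<Longrightarrow> w a = (\<Sum>d\<in>D. of_int (M a d) *s d) \<and> (\<forall>d\<in>D. M a d \<ge> 0)"
      by metis
    have "w' \<alpha> \<in> pos_roots R D" using wP' al unfolding W_plus_def by blast
    then obtain n where n: "w' \<alpha> = (\<Sum>d\<in>D. of_int (n d) *s d)" "\<forall>d\<in>D. n d \<ge> 0"
      unfolding pos_roots_def by blast
    have "w' \<alpha> = (\<Sum>a\<in>S0. of_int (k a) *s (\<Sum>d\<in>D. of_int (M a d) *s d))"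
      unfolding wg2 using M by (intro sum.cong) auto
    also have "\<dots> = (\<Sum>a\<in>S0. \<Sum>d\<in>D. of_int (k a * M a d) *s d)"
      using bf(6) by (simp add: smult_sum vector_smult_assoc)
    also have "\<dots> = (\<Sum>d\<in>D. \<Sum>a\<in>S0. of_int (k a * M a d) *s d)" by (rule sum.swap)
    also have "\<dots> = (\<Sum>d\<in>D. of_int (\<Sum>a\<in>S0. k a * M a d) *s d)"
      using bf(8) by (simp add: sum_smult_l)
    finally have "(\<Sum>d\<in>D. of_int (n d) *s d) = (\<Sum>d\<in>D. of_int (\<Sum>a\<in>S0. k a * M a d) *s d)"
      using n by simp
    hence eq: "\<forall>d\<in>D. n d = (\<Sum>a\<in>S0. k a * M a d)" by (rule uniq_int[OF ss order_refl bf(6)])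
    have "\<forall>d\<in>D. n d = 0"
    proof
      fix d assume d: "d \<in> D"
      have "(\<Sum>a\<in>S0. k a * M a d) \<le> 0"
        using kn M d S0D by (intro sum_nonpos) (meson mult_nonpos_nonneg subsetD)
      thus "n d = 0" using eq n(2) d by force
    qed
    hence "w' \<alpha> = 0" using n(1) by simp
    moreover have "w' \<alpha> \<in> R" using P' aR by blast
    ultimately show ?thesis using bf(2) by simp
  qed
qed


lemma step_B:
  fixes R D S0 :: "'n::finite cvec set"
    and eta :: "'n cvec \<Rightarrow> complex"
    and w w' :: "'n cvec \<Rightarrow> 'n cvec"
  assumes rs: "root_system R" and red: "reduced R" and ss: "simple_system R D"
    and et: "\<forall>v\<in>weyl R. \<forall>a\<in>R. eta (v a) = eta a"
    and S0D: "S0 \<subseteq> D"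
    and wP: "w \<in> W_plus R D S0" and wP': "w' \<in> W_plus R D S0"
    and dir: "direction (w ` H_eta eta S0) = direction (w' ` H_eta eta S0)"
    and x0: "x0 \<in> H_eta eta S0" and al: "\<alpha> \<in> S0"
  shows "w' \<alpha> \<in> w ` S0"
proof -
  note bf = basic_facts[OF rs ss S0D]
  have ww: "w \<in> weyl R" "w' \<in> weyl R" using wP wP' unfolding W_plus_def by auto
  note P = weyl_props[OF bf(3) bf(4) ww(1)]
  note P' = weyl_props[OF bf(3) bf(4) ww(2)]
  obtain k where k: "\<forall>a\<in>S0. k a \<ge> 0" "w' \<alpha> = (\<Sum>a\<in>S0. of_int (k a) *s w a)"
    using step_A[OF rs ss et S0D wP wP' dir x0 al] by blast
  have "\<forall>a\<in>S0. \<exists>m::'n cvec \<Rightarrow> int. (\<forall>b\<in>S0. m b \<ge> 0) \<and> w a = (\<Sum>b\<in>S0. of_int (m b) *s w' b)"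
    using step_A[OF rs ss et S0D wP' wP dir[symmetric] x0] by blast
  then obtain M where M: "\<And>a. a \<in> S0 \<Longrightarrow> (\<forall>b\<in>S0. M a b \<ge> 0) \<and> w a = (\<Sum>b\<in>S0. of_int (M a b) *s w' b)"
    by metis
  have "w' \<alpha> = (\<Sum>a\<in>S0. of_int (k a) *s (\<Sum>b\<in>S0. of_int (M a b) *s w' b))"
    unfolding k(2) using M by (intro sum.cong) auto
  also have "\<dots> = (\<Sum>a\<in>S0. \<Sum>b\<in>S0. of_int (k a * M a b) *s w' b)"
    using bf(8) by (simp add: smult_sum vector_smult_assoc)
  also have "\<dots> = (\<Sum>b\<in>S0. \<Sum>a\<in>S0. of_int (k a * M a b) *s w' b)" by (rule sum.swap)
  also have "\<dots> = (\<Sum>b\<in>S0. of_int (\<Sum>a\<in>S0. k a * M a b) *s w' b)"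
    using bf(8) by (simp add: sum_smult_l)
  finally have e1: "w' \<alpha> = (\<Sum>b\<in>S0. of_int (\<Sum>a\<in>S0. k a * M a b) *s w' b)" .
  have "(\<Sum>b\<in>S0. of_int (if b = \<alpha> then 1 else 0) *s w' b) = (\<Sum>b\<in>S0. if b = \<alpha> then w' b else 0)"
    by (rule sum.cong) auto
  also have "\<dots> = w' \<alpha>" using sum.delta[OF bf(8), of \<alpha> w'] al by simp
  finally have e2: "w' \<alpha> = (\<Sum>b\<in>S0. of_int (if b = \<alpha> then 1 else 0) *s w' b)" by simp
  have "w' (\<Sum>b\<in>S0. of_int (\<Sum>a\<in>S0. k a * M a b) *s b) = w' (\<Sum>b\<in>S0. of_int (if b = \<alpha> then 1 else 0) *s b)"
    using e1 e2 weyl_sum[of w', OF _ _ bf(8)] P' by simp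
  hence "(\<Sum>b\<in>S0. of_int (\<Sum>a\<in>S0. k a * M a b) *s b) = (\<Sum>b\<in>S0. of_int (if b = \<alpha> then 1 else 0) *s b)"
    using P' by (meson bij_is_inj injD)
  hence co: "\<forall>b\<in>S0. (\<Sum>a\<in>S0. k a * M a b) = (if b = \<alpha> then 1 else 0)"
    by (rule uniq_int[OF ss S0D bf(6)])
  have nn: "\<And>a b. a \<in> S0 \<Longrightarrow> b \<in> S0 \<Longrightarrow> k a * M a b \<ge> 0" using k(1) M by simp
  obtain a0 where a0: "a0 \<in> S0" "k a0 * M a0 \<alpha> > 0"
  proof (rule ccontr)
    assume "\<not> thesis"
    hence "\<forall>a\<in>S0. k a * M a \<alpha> \<le> 0" using that by force
    hence "(\<Sum>a\<in>S0. k a * M a \<alpha>) \<le> 0" by (intro sum_nonpos) auto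
    thus False using co al by simp
  qed
  have "k a0 \<ge> 0" "M a0 \<alpha> \<ge> 0" using a0(1) k(1) M[OF a0(1)] al by auto
  hence kpos: "k a0 > 0" "M a0 \<alpha> > 0" using a0(2) by (auto simp: zero_less_mult_iff)
  have Mz: "M a0 b = 0" if b: "b \<in> S0" "b \<noteq> \<alpha>" for b
  proof -
    have "k a0 * M a0 b \<le> (\<Sum>a\<in>S0. k a * M a b)"
      using member_le_sum[of a0 S0 "\<lambda>a. k a * M a b"] nn b(1) a0(1) bf(8) by blast
    also have "\<dots> = 0" using co b by simp
    finally have "k a0 * M a0 b = 0" using nn[OF a0(1) b(1)] by simp
    thus ?thesis using kpos by simp
  qed
  have "w a0 = (\<Sum>b\<in>S0. of_int (M a0 b) *s w' b)" using M a0 by blast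
  also have "\<dots> = (\<Sum>b\<in>S0. if b = \<alpha> then of_int (M a0 \<alpha>) *s w' \<alpha> else 0)"
    using Mz by (intro sum.cong) auto
  also have "\<dots> = of_int (M a0 \<alpha>) *s w' \<alpha>" using sum.delta[OF bf(8), of \<alpha> "\<lambda>_. of_int (M a0 \<alpha>) *s w' \<alpha>"] al by simp
  finally have wa0: "w a0 = of_int (M a0 \<alpha>) *s w' \<alpha>" .
  have "\<alpha> \<in> R" "a0 \<in> R" using al a0(1) bf(7) by blast+
  hence wR: "w' \<alpha> \<in> R" "w a0 \<in> R" using conjunct1[OF conjunct2[OF conjunct2[OF conjunct2[OF P']]]]
     conjunct1[OF conjunct2[OF conjunct2[OF conjunct2[OF P]]]] by blast+
  have "\<forall>c. c *s w' \<alpha> \<in> R \<longrightarrow> c = 1 \<or> c = -1" using red wR(1) unfolding reduced_def by blast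
  hence "(of_int (M a0 \<alpha>) :: complex) = 1 \<or> of_int (M a0 \<alpha>) = (-1 :: complex)"
    using wa0 wR(2) by metis
  hence "M a0 \<alpha> = 1 \<or> M a0 \<alpha> = -1"
    by (metis of_int_eq_1_iff of_int_eq_iff of_int_minus of_int_1)
  hence "M a0 \<alpha> = 1" using kpos(2) by auto
  hence "w a0 = w' \<alpha>" using wa0 by simp
  thus ?thesis using a0 by (metis imageI)
qed


lemma step_C:
  fixes R D S0 :: "'n::finite cvec set"
    and eta :: "'n cvec \<Rightarrow> complex"
    and w w' :: "'n cvec \<Rightarrow> 'n cvec"
  assumes rs: "root_system R" and ss: "simple_system R D"
    and et: "\<forall>v\<in>weyl R. \<forall>a\<in>R. eta (v a) = eta a"
    and S0D: "S0 \<subseteq> D"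
    and ww: "w \<in> weyl R" "w' \<in> weyl R"
    and sub: "w' ` S0 \<subseteq> w ` S0"
  shows "w ` H_eta eta S0 \<subseteq> w' ` H_eta eta S0"
proof
  note bf = basic_facts[OF rs ss S0D]
  note P = weyl_props[OF bf(3) bf(4) ww(1)]
  note P' = weyl_props[OF bf(3) bf(4) ww(2)]
  fix x assume "x \<in> w ` H_eta eta S0"
  then obtain y where y: "y \<in> H_eta eta S0" "x = w y" by blast
  have "bij w'" using P' by blast
  then obtain y' where y': "x = w' y'" by (metis bij_pointE)
  have "y' \<in> H_eta eta S0" unfolding H_eta_def
  proof (intro CollectI ballI)
    fix \<alpha> assume al: "\<alpha> \<in> S0"
    then obtain a where a: "a \<in> S0" "w' \<alpha> = w a" using sub by blast
    have aR: "a \<in> R" "\<alpha> \<in> R" using a al bf(7) by blast+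
    have "bf \<alpha> y' = bf (w' \<alpha>) (w' y')" using P' by simp
    also have "\<dots> = bf (w a) (w y)" using a y y' by simp
    also have "\<dots> = bf a y" using P by simp
    also have "\<dots> = eta a" using y a unfolding H_eta_def by simp
    also have "\<dots> = eta (w a)" using et ww aR by simp
    also have "\<dots> = eta (w' \<alpha>)" using a by simp
    also have "\<dots> = eta \<alpha>" using et ww aR by simp
    finally show "bf \<alpha> y' = eta \<alpha>" .
  qed
  thus "x \<in> w' ` H_eta eta S0" using y' by blast
qed

theorem mainTheorem2:
  fixes R D S0 :: "'n::finite cvec set"
    and eta :: "'n cvec \<Rightarrow> complex"
    and w w' :: "'n cvec \<Rightarrow> 'n cvec"
  assumes "root_system R" and "reduced R" and "irreducible_rs R"
    and "simple_system R D"
    and "\<forall>v\<in>weyl R. \<forall>a\<in>R. eta (v a) = eta a"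
    and "S0 \<subseteq> D"
    and "w \<in> W_plus R D S0" and "w' \<in> W_plus R D S0"
    and "direction (w ` H_eta eta S0) = direction (w' ` H_eta eta S0)"
  shows "w ` H_eta eta S0 = w' ` H_eta eta S0"
proof (cases "H_eta eta S0 = {}")
  case True
  then show ?thesis by simp
next
  case False
  then obtain x0 where x0: "x0 \<in> H_eta eta S0" by blast
  have ww: "w \<in> weyl R" "w' \<in> weyl R" using assms(7,8) unfolding W_plus_def by auto
  have s1: "w' ` S0 \<subseteq> w ` S0"
    using step_B[OF assms(1,2,4,5,6,7,8,9) x0] by blast
  have s2: "w ` S0 \<subseteq> w' ` S0"
    using step_B[OF assms(1,2,4,5,6,8,7) assms(9)[symmetric] x0] by blast
  show ?thesis
    using step_C[OF assms(1,4,5,6) ww s1] step_C[OF assms(1,4,5,6) ww(2,1) s2] by blast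
qed

end
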